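(* Let $X$ be a proper, connected and locally connected metric space, and let $\bar X$ be its Freudenthal compactification. The following are equivalent: (1) $\bar X$ is a coarse compactification of $X$; (2) for each $m>0$ and each bounded subset $K\subset X$ there is a bounded subset $L\supset K$ of $X$ such that for every $x\in X\setminus L$ the ball $B(x,m)$ is contained in a single connected component of $X\setminus K$.
   Context: A metric space is proper if closed balls are compact. A function $g:X\to\mathbb R$ is slowly oscillating if for all $r,\epsilon>0$ there is a bounded $K\subset X$ such that $x,y\in X\setminus K$ and $d(x,y)<r$ imply $|g(x)-g(y)|<\epsilon$. A coarse compactification of a proper metric space $X$ is a compactification $\bar X$ of $X$ such that every continuous $f:\bar X\to\mathbb R$ restricts to a slowly oscillating function on $X$ (equivalently, $\bar X$ is dominated by the Higson compactification of $X$, the compactification induced by all continuous slowly oscillating functions $X\to[0,1]$). The Freudenthal compactification of $X$ is $X\cup \mathrm{Ends}(X)$, where a Freudenthal end is a decreasing sequence $\{U_i\}_{i\ge1}$ with $U_i$ a component of $X\setminus K_i$, for an exhaustion of $X$ by compact sets $K_i$ with $K_i\subset\operatorname{int}(K_{i+1})$; the topology has as a basis the open subsets of $X$ with compact closure together with the sets consisting of a component $U$ of some $X\setminus K_i$ union all ends containing $U$. Its corona $\bar X\setminus X$ is zero-dimensional. *)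

theory Defs
  imports "HOL-Analysis.Analysis"
begin

text \<open>The metric space X is the whole type 'a (of class metric_space).\<close>

definition proper_metric :: "'a::metric_space itself \<Rightarrow> bool" where
  "proper_metric _ \<longleftrightarrow> (\<forall>(x::'a) r. compact (cball x r))"

definition slowly_oscillating :: "('a::metric_space \<Rightarrow> real) \<Rightarrow> bool" where
  "slowly_oscillating g \<longleftrightarrow>
     (\<forall>r>0. \<forall>\<epsilon>>0. \<exists>K. bounded K \<and>
        (\<forall>x y. x \<notin> K \<longrightarrow> y \<notin> K \<longrightarrow> dist x y < r \<longrightarrow> \<bar>g x - g y\<bar> < \<epsilon>))"

definition compactification :: "'b topology \<Rightarrow> ('a::metric_space \<Rightarrow> 'b) \<Rightarrow> bool" where
  "compactification T j \<longleftrightarrow>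
     compact_space T \<and> Hausdorff_space T \<and> embedding_map euclidean T j \<and>
     T closure_of (range j) = topspace T"

definition coarse_compactification :: "'b topology \<Rightarrow> ('a::metric_space \<Rightarrow> 'b) \<Rightarrow> bool" where
  "coarse_compactification T j \<longleftrightarrow>
     compactification T j \<and>
     (\<forall>f. continuous_map T euclideanreal f \<longrightarrow> slowly_oscillating (f \<circ> j))"

definition exhaustion :: "(nat \<Rightarrow> 'a::metric_space set) \<Rightarrow> bool" where
  "exhaustion K \<longleftrightarrow> (\<forall>i. compact (K i) \<and> K i \<subseteq> interior (K (Suc i))) \<and> (\<Union>i. K i) = UNIV"

definition freud_ends :: "(nat \<Rightarrow> 'a::metric_space set) \<Rightarrow> (nat \<Rightarrow> 'a set) set" where
  "freud_ends K = {e. \<forall>i. e i \<in> components (- K i) \<and> e (Suc i) \<subseteq> e i}"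

definition freud_basis :: "(nat \<Rightarrow> 'a::metric_space set) \<Rightarrow> ('a + (nat \<Rightarrow> 'a set)) set set" where
  "freud_basis K =
     {Inl ` V | V. open V \<and> compact (closure V)} \<union>
     {Inl ` U \<union> Inr ` {e \<in> freud_ends K. \<exists>j. e j \<subseteq> U} | U i. U \<in> components (- K i)}"

definition freudenthal :: "(nat \<Rightarrow> 'a::metric_space set) \<Rightarrow> ('a + (nat \<Rightarrow> 'a set)) topology" where
  "freudenthal K = topology_generated_by (freud_basis K)"

end

theory Submission
  imports Defs
begin


locale freud =
  fixes K :: "nat \<Rightarrow> 'a::metric_space set"
  assumes proper: "proper_metric TYPE('a)"
    and conn: "connected (UNIV :: 'a set)"
    and lc: "locally_connected_space (euclidean :: 'a topology)"
    and exh: "exhaustion K"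
begin

lemma comp_open:
  assumes "open (S::'a set)" "C \<in> components S" shows "open C"
proof -
  obtain x where x: "x \<in> S" "C = connected_component_set S x" using assms(2) componentsE by blast
  have "connected_component_of_set (subtopology euclidean S) x = connected_component_set S x"
    by (auto simp: connected_component_of_def connectedin_subtopology connected_component_def)
  moreover have "openin euclidean (connected_component_of_set (subtopology euclidean S) x)"
    by (rule lc[unfolded locally_connected_space_eq_open_connected_component_of, rule_format]) (use assms(1) x(1) in auto)
  ultimately have "open (connected_component_set S x)" by simp
  then show ?thesis using x(2) by simp
qed

lemma cball_compact: "compact (cball (x::'a) r)"
  using proper unfolding proper_metric_def by blast

lemma bounded_closed_compact: assumes "bounded (S::'a set)" "closed S" shows "compact S"
proof -
  obtain x r where "S \<subseteq> cball x r" using assms(1) bounded_subset_cball by blast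
  then have "S = cball x r \<inter> S" by blast
  then show ?thesis using compact_Int_closed[OF cball_compact assms(2)] by metis
qed

lemma bounded_compact_closure: "bounded (S::'a set) \<Longrightarrow> compact (closure S)"
  using bounded_closed_compact bounded_closure closed_closure by blast

lemma Kc: "compact (K i)" using exh unfolding exhaustion_def by blast
lemma Kint: "K i \<subseteq> interior (K (Suc i))" using exh unfolding exhaustion_def by blast
lemma Kun: "(\<Union>i. K i) = UNIV" using exh unfolding exhaustion_def by blast
lemma Kclosed: "closed (K i)" by (simp add: Kc compact_imp_closed)
lemma Kbounded: "bounded (K i)" by (simp add: Kc compact_imp_bounded)
lemma Ksuc: "K i \<subseteq> K (Suc i)" using Kint interior_subset by blast
lemma Kmono: "i \<le> j \<Longrightarrow> K i \<subseteq> K j"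
  by (induction j rule: dec_induct) (use Ksuc in auto)
lemma Kopen: "open (- K i)" by (simp add: Kclosed open_Compl)
lemma Kcomp_open: "C \<in> components (- K i) \<Longrightarrow> open C"
  using Kopen comp_open by blast

lemma intK_cover: "(\<Union>i. interior (K i)) = UNIV"
proof -
  { fix x :: 'a obtain i where "x \<in> K i" using Kun by blast
    then have "x \<in> interior (K (Suc i))" using Kint by blast
    then have "x \<in> (\<Union>i. interior (K i))" by blast }
  then show ?thesis by blast
qed

lemma compact_in_K: assumes "compact (S::'a set)" shows "\<exists>i. S \<subseteq> K i"
proof -
  have S: "S \<subseteq> (\<Union>i\<in>UNIV. interior (K i))" by (simp add: intK_cover)
  have op: "\<And>i. i \<in> UNIV \<Longrightarrow> open (interior (K i))" by simp
  obtain I where I: "I \<subseteq> UNIV" "finite I" "S \<subseteq> (\<Union>i\<in>I. interior (K i))"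
    by (rule compactE_image[OF assms op S])
  define n where "n = Max (insert 0 I)"
  have "\<And>i. i \<in> I \<Longrightarrow> interior (K i) \<subseteq> K n"
  proof -
    fix i assume "i \<in> I"
    then have "i \<le> n" unfolding n_def using I(2) by simp
    then show "interior (K i) \<subseteq> K n" using Kmono interior_subset by blast
  qed
  then show ?thesis using I(3) by blast
qed

lemma bounded_in_K: assumes "bounded (S::'a set)" shows "\<exists>i. S \<subseteq> K i"
proof -
  obtain i where "closure S \<subseteq> K i" using compact_in_K[OF bounded_compact_closure[OF assms]] by blast
  then have "S \<subseteq> K i" using closure_subset[of S] by (rule order_trans[rotated])
  then show ?thesis by blast
qed


abbreviation "T \<equiv> freudenthal K"
abbreviation "E \<equiv> freud_ends K"
definition NB :: "'a set \<Rightarrow> ('a + (nat \<Rightarrow> 'a set)) set" where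
  "NB U = Inl ` U \<union> Inr ` {e \<in> E. \<exists>j. e j \<subseteq> U}"

lemma basis_cases: "s \<in> freud_basis K \<Longrightarrow> (\<exists>V. s = Inl ` V \<and> open V \<and> compact (closure V)) \<or> (\<exists>U i. s = NB U \<and> U \<in> components (- K i))"
  unfolding freud_basis_def NB_def
  apply (elim UnE CollectE exE conjE)
   apply (rule disjI1, rule exI, (rule conjI, assumption)+, assumption)
  apply (rule disjI2, rule exI, rule exI, rule conjI, assumption, assumption)
  done

lemma end_mem: "e \<in> E \<Longrightarrow> e i \<in> components (- K i)"
  unfolding freud_ends_def by blast
lemma end_dec: assumes "e \<in> E" "i \<le> j" shows "e j \<subseteq> e i"
  using assms(2) by (induction j rule: dec_induct) (use assms(1) in \<open>auto simp: freud_ends_def\<close>)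
lemma end_ne: "e \<in> E \<Longrightarrow> e i \<noteq> {}"
  using end_mem in_components_nonempty by blast
lemma end_lvl: assumes "e \<in> E" "U \<in> components (- K i)" "e j \<subseteq> U" shows "e i = U"
proof -
  have "e (max i j) \<subseteq> e i" "e (max i j) \<subseteq> e j" using end_dec assms(1) by auto
  then have "e i \<inter> U \<noteq> {}" using end_ne[OF assms(1), of "max i j"] assms(3) by blast
  then show ?thesis using components_eq end_mem assms by blast
qed

lemma Inl_in_basis: "open V \<Longrightarrow> compact (closure V) \<Longrightarrow> Inl ` V \<in> freud_basis K"
  unfolding freud_basis_def by (rule UnI1, rule CollectI, rule exI[of _ V], simp)
lemma NB_in_basis: "U \<in> components (- K i) \<Longrightarrow> NB U \<in> freud_basis K"
  unfolding freud_basis_def NB_def by (rule UnI2, rule CollectI, rule exI[of _ U], rule exI[of _ i], simp)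

lemma basis_top: "\<Union>(freud_basis K) = range (Inl :: 'a \<Rightarrow> _) \<union> Inr ` E"
proof
  show "\<Union>(freud_basis K) \<subseteq> range (Inl :: 'a \<Rightarrow> _) \<union> Inr ` E"
    unfolding freud_basis_def by auto
  show "range (Inl :: 'a \<Rightarrow> _) \<union> Inr ` E \<subseteq> \<Union>(freud_basis K)"
  proof
    fix p assume "p \<in> range (Inl :: 'a \<Rightarrow> _) \<union> Inr ` E"
    then consider x where "p = Inl x" | e where "p = Inr e" "e \<in> E" by blast
    then show "p \<in> \<Union>(freud_basis K)"
    proof cases
      case 1
      have "open (ball x 1)" "compact (closure (ball x 1))"
        using bounded_compact_closure[of "ball x 1"] by auto
      then have "Inl ` ball x 1 \<in> freud_basis K" by (rule Inl_in_basis)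
      moreover have "p \<in> Inl ` ball x 1" using 1 by simp
      ultimately show ?thesis by blast
    next
      case 2
      have "NB (e 0) \<in> freud_basis K" using end_mem[OF 2(2)] by (rule NB_in_basis)
      moreover have "p \<in> NB (e 0)" unfolding NB_def using 2 by blast
      ultimately show ?thesis by blast
    qed
  qed
qed

lemma topT: "topspace T = range (Inl :: 'a \<Rightarrow> _) \<union> Inr ` E"
  unfolding freudenthal_def using basis_top by simp

lemma openin_NB: "U \<in> components (- K i) \<Longrightarrow> openin T (NB U)"
  unfolding freudenthal_def NB_def
  by (rule topology_generated_by_Basis) (auto simp: freud_basis_def)

lemma openin_Inl: assumes "open V" shows "openin T (Inl ` V)"
proof -
  have "Inl ` V = \<Union>((\<lambda>x. Inl ` (V \<inter> ball x 1)) ` V)" by auto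
  moreover have "openin T (Inl ` (V \<inter> ball x 1))" for x
  proof -
    have "compact (closure (V \<inter> ball x 1))"
      by (meson bounded_Int bounded_ball bounded_compact_closure)
    then have "Inl ` (V \<inter> ball x 1) \<in> freud_basis K"
      unfolding freud_basis_def using assms by blast
    then show ?thesis unfolding freudenthal_def by (rule topology_generated_by_Basis)
  qed
  ultimately show ?thesis by (metis (no_types, lifting) imageE openin_Union)
qed

lemma NB_end: "e \<in> E \<Longrightarrow> Inr e \<in> NB (e i)"
  unfolding NB_def by blast

lemma NB_mono: assumes "e \<in> E" "i \<le> j" shows "NB (e j) \<subseteq> NB (e i)"
  unfolding NB_def using end_dec[OF assms] by blast

lemma nbhd_pt: "openin T W \<Longrightarrow> Inl x \<in> W \<Longrightarrow> \<exists>d>0. Inl ` ball x d \<subseteq> W"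
  unfolding freudenthal_def openin_topology_generated_by_iff
proof (induction arbitrary: x rule: generate_topology_on.induct)
  case Empty then show ?case by simp
next
  case (Int a b)
  from Int.prems have xa: "Inl x \<in> a" and xb: "Inl x \<in> b" by auto
  obtain d1 where d1: "d1 > 0" "Inl ` ball x d1 \<subseteq> a" using Int.IH(1)[OF xa] by blast
  obtain d2 where d2: "d2 > 0" "Inl ` ball x d2 \<subseteq> b" using Int.IH(2)[OF xb] by blast
  have "Inl ` ball x (min d1 d2) \<subseteq> a \<inter> b" using d1 d2 by auto
  then show ?case using d1 d2 by (intro exI[of _ "min d1 d2"]) simp
next
  case (UN F)
  then obtain k where k: "k \<in> F" "Inl x \<in> k" by blast
  obtain d where d: "d > 0" "Inl ` ball x d \<subseteq> k" using UN.IH[OF k] by blast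
  then have "Inl ` ball x d \<subseteq> \<Union>F" using k(1) by blast
  then show ?case using d(1) by blast
next
  case (Basis s)
  from basis_cases[OF Basis.hyps] show ?case
  proof (elim disjE exE conjE)
    fix V assume V: "s = Inl ` V" "open V"
    then have "x \<in> V" using Basis.prems by auto
    then obtain d where "d > 0" "ball x d \<subseteq> V" using V(2) open_contains_ball by blast
    then show ?thesis using V(1) by blast
  next
    fix U i assume U: "s = NB U" "U \<in> components (- K i)"
    then have "x \<in> U" using Basis.prems unfolding NB_def by auto
    then obtain d where "d > 0" "ball x d \<subseteq> U" using U(2) Kcomp_open open_contains_ball by blast
    then have "Inl ` ball x d \<subseteq> NB U" unfolding NB_def by blast
    then show ?thesis using U(1) \<open>d > 0\<close> by blast
  qed
qed

lemma nbhd_end: "openin T W \<Longrightarrow> Inr e \<in> W \<Longrightarrow> e \<in> E \<Longrightarrow> \<exists>J. NB (e J) \<subseteq> W"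
  unfolding freudenthal_def openin_topology_generated_by_iff
proof (induction arbitrary: e rule: generate_topology_on.induct)
  case Empty then show ?case by simp
next
  case (Int a b)
  from Int.prems have xa: "Inr e \<in> a" and xb: "Inr e \<in> b" and eE: "e \<in> E" by auto
  obtain J1 where J1: "NB (e J1) \<subseteq> a" using Int.IH(1)[OF xa eE] by blast
  obtain J2 where J2: "NB (e J2) \<subseteq> b" using Int.IH(2)[OF xb eE] by blast
  have "NB (e (max J1 J2)) \<subseteq> NB (e J1)" "NB (e (max J1 J2)) \<subseteq> NB (e J2)"
    using NB_mono[OF eE] by auto
  then have "NB (e (max J1 J2)) \<subseteq> a \<inter> b" using J1 J2 by blast
  then show ?case by blast
next
  case (UN F)
  then obtain k where k: "k \<in> F" "Inr e \<in> k" by blast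
  obtain J where "NB (e J) \<subseteq> k" using UN.IH[OF k UN.prems(2)] by blast
  then have "NB (e J) \<subseteq> \<Union>F" using k(1) by blast
  then show ?case by blast
next
  case (Basis s)
  from basis_cases[OF Basis.hyps] show ?case
  proof (elim disjE exE conjE)
    fix V assume V: "s = Inl ` V" "open V"
    then show ?thesis using Basis.prems by auto
  next
    fix U i assume U: "s = NB U" "U \<in> components (- K i)"
    then obtain j where "e j \<subseteq> U" using Basis.prems unfolding NB_def by auto
    then have "e i = U" using end_lvl U(2) Basis.prems(2) by blast
    then show ?thesis using U(1) by blast
  qed
qed

lemma continuous_mapI_real:
  assumes "\<And>p \<epsilon>. p \<in> topspace X \<Longrightarrow> \<epsilon> > 0 \<Longrightarrow> \<exists>W. openin X W \<and> p \<in> W \<and> (\<forall>q\<in>W. \<bar>f q - f p\<bar> < \<epsilon>)"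
  shows "continuous_map X euclideanreal f"
  unfolding continuous_map_def
proof (intro conjI allI impI)
  show "f \<in> topspace X \<rightarrow> topspace euclideanreal" by simp
  fix G :: "real set" assume "openin euclideanreal G"
  then have oO: "open G" by simp
  show "openin X {x \<in> topspace X. f x \<in> G}"
  proof (subst openin_subopen, intro ballI)
    fix p assume p: "p \<in> {x \<in> topspace X. f x \<in> G}"
    then obtain \<epsilon> where "\<epsilon> > 0" "ball (f p) \<epsilon> \<subseteq> G" using oO open_contains_ball by blast
    have pX: "p \<in> topspace X" using p by simp
    obtain W where W: "openin X W" "p \<in> W" "\<forall>q\<in>W. \<bar>f q - f p\<bar> < \<epsilon>"
      using assms[OF pX \<open>\<epsilon> > 0\<close>] by blast
    have "W \<subseteq> {x \<in> topspace X. f x \<in> G}"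
      using W \<open>ball (f p) \<epsilon> \<subseteq> G\<close> openin_subset[OF W(1)] by (force simp: dist_real_def abs_minus_commute)
    then show "\<exists>T. openin X T \<and> p \<in> T \<and> T \<subseteq> {x \<in> topspace X. f x \<in> G}" using W by blast
  qed
qed

end


context freud begin

lemma comp_closure_meets:
  assumes "closed (A::'a set)" "A \<noteq> {}" "C \<in> components (- A)"
  shows "closure C \<inter> A \<noteq> {}"
proof
  assume H: "closure C \<inter> A = {}"
  have Cne: "C \<noteq> {}" using assms(3) by (rule in_components_nonempty)
  have "closure C \<subseteq> - A" using H by blast
  moreover have "connected (closure C)" using in_components_connected[OF assms(3)] by (rule connected_imp_connected_closure)
  moreover have "C \<subseteq> closure C" by (rule closure_subset)
  ultimately have "closure C = C" using assms(3) Cne unfolding in_components_maximal by blast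
  then have cC: "closed C" by (metis closed_closure)
  have oC: "open C" using comp_open[OF _ assms(3)] assms(1) by (simp add: open_Compl)
  have "C \<inter> UNIV = {} \<or> (- C) \<inter> UNIV = {}"
    by (rule connectedD[OF conn oC]) (use cC in auto)
  moreover have "C \<noteq> UNIV" using in_components_subset[OF assms(3)] assms(2) by blast
  ultimately show False using Cne by auto
qed

lemma KL:
  assumes "compact (A::'a set)" "compact B" "A \<subseteq> interior B"
  shows "finite {C \<in> components (- A). \<not> C \<subseteq> B}"
proof (cases "A = {}")
  case True
  have "components (- A) = {UNIV}" using True conn components_eq_sing_iff[of "UNIV::'a set"] by simp
  then show ?thesis by simp
next
  case False
  have clA: "closed A" using assms(1) by (rule compact_imp_closed)
  have clB: "closed B" using assms(2) by (rule compact_imp_closed)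
  have meet: "C \<inter> frontier B \<noteq> {}" if C: "C \<in> components (- A)" "\<not> C \<subseteq> B" for C
  proof -
    have "closure C \<inter> A \<noteq> {}" using comp_closure_meets[OF clA False C(1)] .
    then have "interior B \<inter> closure C \<noteq> {}" using assms(3) by blast
    then have "interior B \<inter> C \<noteq> {}" using open_Int_closure_eq_empty[of "interior B" C] by simp
    then have "C \<inter> B \<noteq> {}" using interior_subset[of B] by blast
    moreover have "C - B \<noteq> {}" using C(2) by blast
    ultimately show ?thesis using connected_Int_frontier[OF in_components_connected[OF C(1)]] by blast
  qed
  have fB: "compact (frontier B)"
  proof -
    have "frontier B \<subseteq> B" using clB by (simp add: frontier_subset_closed)
    then have "frontier B = B \<inter> frontier B" by blast
    then show ?thesis using compact_Int_closed[OF assms(2) frontier_closed[of B]] by simp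
  qed
  have "frontier B \<inter> interior B = {}" unfolding frontier_def by blast
  then have "frontier B \<subseteq> \<Union>(components (- A))" using assms(3) by auto
  moreover have "\<And>C. C \<in> components (- A) \<Longrightarrow> open C"
  proof -
    fix C assume "C \<in> components (- A)"
    moreover have "open (- A)" using clA by (simp add: open_Compl)
    ultimately show "open C" using comp_open by blast
  qed
  ultimately obtain F where F: "F \<subseteq> components (- A)" "finite F" "frontier B \<subseteq> \<Union>F"
    using compactE[OF fB] by metis
  have "{C \<in> components (- A). \<not> C \<subseteq> B} \<subseteq> F"
  proof
    fix C assume "C \<in> {C \<in> components (- A). \<not> C \<subseteq> B}"
    then have C: "C \<in> components (- A)" "\<not> C \<subseteq> B" by auto
    then obtain z where z: "z \<in> C" "z \<in> frontier B" using meet by blast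
    then obtain C' where C': "C' \<in> F" "z \<in> C'" using F(3) by blast
    then have "C' \<in> components (- A)" using F(1) by blast
    then have "C = C'" using components_eq[OF C(1)] z(1) C'(2) by blast
    then show "C \<in> F" using C'(1) by simp
  qed
  then show ?thesis using F(2) finite_subset by blast
qed

end



definition good :: "'b set set \<Rightarrow> 'b set \<Rightarrow> bool" where
  "good \<U> W \<longleftrightarrow> (\<exists>F. finite F \<and> F \<subseteq> \<U> \<and> W \<subseteq> \<Union>F)"

lemma good_mono: "good \<U> A \<Longrightarrow> B \<subseteq> A \<Longrightarrow> good \<U> B"
  unfolding good_def by blast

lemma good_Un: assumes "good \<U> A" "good \<U> B" shows "good \<U> (A \<union> B)"
proof -
  obtain F1 where "finite F1" "F1 \<subseteq> \<U>" "A \<subseteq> \<Union>F1" using assms(1) unfolding good_def by blast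
  moreover obtain F2 where "finite F2" "F2 \<subseteq> \<U>" "B \<subseteq> \<Union>F2" using assms(2) unfolding good_def by blast
  ultimately have "finite (F1 \<union> F2)" "F1 \<union> F2 \<subseteq> \<U>" "A \<union> B \<subseteq> \<Union>(F1 \<union> F2)" by auto
  then show ?thesis unfolding good_def by blast
qed

lemma good_UN: "finite F \<Longrightarrow> (\<And>V. V \<in> F \<Longrightarrow> good \<U> (N V)) \<Longrightarrow> good \<U> (\<Union>(N ` F))"
proof (induction F rule: finite_induct)
  case empty then show ?case unfolding good_def by auto
next
  case (insert x F)
  have "good \<U> (N x \<union> \<Union>(N ` F))" by (rule good_Un) (use insert in auto)
  then show ?case by simp
qed

lemma good_single: "G \<in> \<U> \<Longrightarrow> W \<subseteq> G \<Longrightarrow> good \<U> W"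
  unfolding good_def by (rule exI[of _ "{G}"]) auto

context freud begin

lemma cont_Inl: "continuous_map euclidean T Inl"
  unfolding continuous_map_def
proof (intro conjI allI impI)
  show "Inl \<in> topspace euclidean \<rightarrow> topspace T" using topT by auto
  fix W assume W: "openin T W"
  have "open {x. Inl x \<in> W}"
    unfolding open_contains_ball
  proof (intro ballI)
    fix x assume "x \<in> {x. Inl x \<in> W}"
    then obtain d where "d > 0" "Inl ` ball x d \<subseteq> W" using nbhd_pt[OF W] by blast
    then show "\<exists>e>0. ball x e \<subseteq> {x. Inl x \<in> W}" by blast
  qed
  then show "openin euclidean {x \<in> topspace euclidean. Inl x \<in> W}" by simp
qed

lemma good_compact: assumes "compact C" "\<forall>G\<in>\<U>. openin T G" "topspace T \<subseteq> \<Union>\<U>"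
  shows "good \<U> (Inl ` C)"
proof -
  have "compactin T (Inl ` C)"
    by (rule image_compactin[OF _ cont_Inl]) (use assms(1) in simp)
  moreover have "Inl ` C \<subseteq> \<Union>\<U>" using assms(3) topT by auto
  ultimately show ?thesis unfolding compactin_def good_def using assms(2) by blast
qed

lemma comp_sub:
  assumes "U \<in> components S" "connected V" "V \<subseteq> S" "V \<inter> U \<noteq> {}"
  shows "V \<subseteq> U"
proof -
  have "connected (U \<union> V)" using in_components_connected[OF assms(1)] assms(2,4)
    by (intro connected_Un) auto
  moreover have "U \<subseteq> U \<union> V" "U \<union> V \<subseteq> S" "U \<union> V \<noteq> {}" using in_components_subset[OF assms(1)] assms(3,4) by auto
  ultimately have "U \<union> V = U" using assms(1) unfolding in_components_maximal by blast
  then show ?thesis by blast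
qed

lemma cover_lvl:
  assumes sat: "\<And>V. V \<in> components (- K j) \<Longrightarrow> V \<inter> U \<noteq> {} \<Longrightarrow> V \<subseteq> U"
  shows "Inl ` U \<union> Inr ` {e \<in> E. e j \<subseteq> U} \<subseteq>
     Inl ` K (Suc j) \<union> \<Union>(NB ` {V \<in> components (- K j). \<not> V \<subseteq> K (Suc j) \<and> V \<subseteq> U})"
proof
  fix p assume "p \<in> Inl ` U \<union> Inr ` {e \<in> E. e j \<subseteq> U}"
  then consider x where "p = Inl x" "x \<in> U" | e where "p = Inr e" "e \<in> E" "e j \<subseteq> U" by blast
  then show "p \<in> Inl ` K (Suc j) \<union> \<Union>(NB ` {V \<in> components (- K j). \<not> V \<subseteq> K (Suc j) \<and> V \<subseteq> U})"
  proof cases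
    case 1
    show ?thesis
    proof (cases "x \<in> K (Suc j)")
      case True then show ?thesis using 1 by blast
    next
      case False
      then have xK: "x \<in> - K j" using Ksuc by blast
      define V where "V = connected_component_set (- K j) x"
      have V: "V \<in> components (- K j)" unfolding V_def using xK by (rule componentsI)
      have xV: "x \<in> V" unfolding V_def using xK by simp
      have "V \<subseteq> U" using sat[OF V] xV 1(2) by blast
      moreover have "\<not> V \<subseteq> K (Suc j)" using xV False by blast
      moreover have "p \<in> NB V" using 1(1) xV unfolding NB_def by blast
      ultimately show ?thesis using V by blast
    qed
  next
    case 2
    have V: "e j \<in> components (- K j)" using end_mem[OF 2(2)] .
    have "e (Suc j) \<subseteq> e j" using end_dec[OF 2(2)] by simp
    moreover have "e (Suc j) \<noteq> {}" "e (Suc j) \<subseteq> - K (Suc j)"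
      using end_ne[OF 2(2)] in_components_subset[OF end_mem[OF 2(2)]] by auto
    ultimately have "\<not> e j \<subseteq> K (Suc j)" by blast
    moreover have "p \<in> NB (e j)" using 2 NB_end by blast
    ultimately show ?thesis using V 2(3) by blast
  qed
qed

lemma bad_lvl:
  assumes cov: "\<forall>G\<in>\<U>. openin T G" "topspace T \<subseteq> \<Union>\<U>"
    and sat: "\<And>V. V \<in> components (- K j) \<Longrightarrow> V \<inter> U \<noteq> {} \<Longrightarrow> V \<subseteq> U"
    and bad: "\<not> good \<U> (Inl ` U \<union> Inr ` {e \<in> E. e j \<subseteq> U})"
  shows "\<exists>V\<in>components (- K j). V \<subseteq> U \<and> \<not> good \<U> (NB V)"
proof (rule ccontr)
  assume H: "\<not> ?thesis"
  define F where "F = {V \<in> components (- K j). \<not> V \<subseteq> K (Suc j) \<and> V \<subseteq> U}"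
  have "F \<subseteq> {C \<in> components (- K j). \<not> C \<subseteq> K (Suc j)}" unfolding F_def by blast
  moreover have "finite {C \<in> components (- K j). \<not> C \<subseteq> K (Suc j)}"
    by (rule KL[OF Kc Kc Kint])
  ultimately have fF: "finite F" by (rule finite_subset)
  have "good \<U> (\<Union>(NB ` F))"
    by (rule good_UN[OF fF]) (use H in \<open>auto simp: F_def\<close>)
  moreover have "good \<U> (Inl ` K (Suc j))" by (rule good_compact[OF Kc cov])
  ultimately have g: "good \<U> (Inl ` K (Suc j) \<union> \<Union>(NB ` F))" by (rule good_Un[rotated])
  have sub: "Inl ` U \<union> Inr ` {e \<in> E. e j \<subseteq> U} \<subseteq> Inl ` K (Suc j) \<union> \<Union>(NB ` F)"
    unfolding F_def by (rule cover_lvl[OF sat])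
  show False using good_mono[OF g sub] bad by simp
qed

lemma NB_sub: assumes "U \<in> components (- K j)"
  shows "NB U \<subseteq> Inl ` U \<union> Inr ` {e \<in> E. e (Suc j) \<subseteq> U}"
proof
  fix p assume "p \<in> NB U"
  then consider x where "p = Inl x" "x \<in> U" | e j' where "p = Inr e" "e \<in> E" "e j' \<subseteq> U"
    unfolding NB_def by blast
  then show "p \<in> Inl ` U \<union> Inr ` {e \<in> E. e (Suc j) \<subseteq> U}"
  proof cases
    case 1 then show ?thesis by blast
  next
    case 2
    have "e j = U" using end_lvl[OF 2(2) assms 2(3)] .
    then have "e (Suc j) \<subseteq> U" using end_dec[OF 2(2), of j "Suc j"] by simp
    then show ?thesis using 2 by blast
  qed
qed

lemma compact_T: "compact_space T"
  unfolding compact_space_alt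
proof (intro allI impI)
  fix \<U> assume A: "(\<forall>G\<in>\<U>. openin T G) \<and> topspace T \<subseteq> \<Union>\<U>"
  then have cov: "\<forall>G\<in>\<U>. openin T G" "topspace T \<subseteq> \<Union>\<U>" by auto
  show "\<exists>F. finite F \<and> F \<subseteq> \<U> \<and> topspace T \<subseteq> \<Union>F"
  proof (rule ccontr)
    assume "\<not> ?thesis"
    then have bad0: "\<not> good \<U> (topspace T)" unfolding good_def by blast
    have eq0: "topspace T = Inl ` UNIV \<union> Inr ` {e \<in> E. e 0 \<subseteq> UNIV}" using topT by auto
    have "\<exists>V\<in>components (- K 0). V \<subseteq> UNIV \<and> \<not> good \<U> (NB V)"
      by (rule bad_lvl[OF cov]) (use bad0 eq0 in auto)
    then have P0: "\<exists>V. V \<in> components (- K 0) \<and> \<not> good \<U> (NB V)" by blast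
    have Pstep: "\<exists>V'. (V' \<in> components (- K (Suc n)) \<and> \<not> good \<U> (NB V')) \<and> V' \<subseteq> V"
      if "V \<in> components (- K n) \<and> \<not> good \<U> (NB V)" for V n
    proof -
      have V: "V \<in> components (- K n)" "\<not> good \<U> (NB V)" using that by auto
      have sat: "V' \<subseteq> V" if "V' \<in> components (- K (Suc n))" "V' \<inter> V \<noteq> {}" for V'
      proof (rule comp_sub[OF V(1)])
        show "connected V'" using that(1) by (rule in_components_connected)
        show "V' \<subseteq> - K n" using in_components_subset[OF that(1)] Ksuc[of n] by blast
        show "V' \<inter> V \<noteq> {}" by fact
      qed
      have bd: "\<not> good \<U> (Inl ` V \<union> Inr ` {e \<in> E. e (Suc n) \<subseteq> V})"
        using V(2) good_mono NB_sub[OF V(1)] by blast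
      have "\<exists>V'\<in>components (- K (Suc n)). V' \<subseteq> V \<and> \<not> good \<U> (NB V')"
        using bad_lvl[OF cov sat bd] .
      then show ?thesis by blast
    qed
    obtain e where e: "\<And>n. e n \<in> components (- K n) \<and> \<not> good \<U> (NB (e n))"
      "\<And>n. e (Suc n) \<subseteq> e n"
      using dependent_nat_choice[of "\<lambda>n V. V \<in> components (- K n) \<and> \<not> good \<U> (NB V)" "\<lambda>n V V'. V' \<subseteq> V", OF P0 Pstep]
      by blast
    have eE: "e \<in> E" unfolding freud_ends_def using e by blast
    then have "Inr e \<in> topspace T" using topT by blast
    then obtain G where G: "G \<in> \<U>" "Inr e \<in> G" using cov(2) by blast
    obtain J where "NB (e J) \<subseteq> G" using nbhd_end[OF _ G(2) eE] cov(1) G(1) by blast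
    then have "good \<U> (NB (e J))" using good_single[OF G(1)] by blast
    then show False using e(1) by blast
  qed
qed

end


context freud begin

lemma disjnt_Inl: "disjnt A B \<Longrightarrow> disjnt (Inl ` A) (Inl ` B)"
  unfolding disjnt_def by auto

lemma NB_disj: assumes "U \<in> components (- K i)" "V \<in> components (- K i)" "U \<noteq> V"
  shows "disjnt (NB U) (NB V)"
  unfolding disjnt_def
proof (rule ccontr)
  assume "NB U \<inter> NB V \<noteq> {}"
  then obtain p where p: "p \<in> NB U" "p \<in> NB V" by blast
  have UV: "U \<inter> V = {}" using components_nonoverlap[OF assms(1,2)] assms(3) by blast
  show False
  proof (cases p)
    case (Inl x)
    then show False using p UV unfolding NB_def by auto
  next
    case (Inr g)
    then obtain j j' where g: "g \<in> E" "g j \<subseteq> U" "g j' \<subseteq> V" using p unfolding NB_def by auto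
    have "g i = U" using end_lvl[OF g(1) assms(1) g(2)] .
    moreover have "g i = V" using end_lvl[OF g(1) assms(2) g(3)] .
    ultimately show False using assms(3) by simp
  qed
qed

lemma sepI: "openin X U \<Longrightarrow> openin X V \<Longrightarrow> p \<in> U \<Longrightarrow> q \<in> V \<Longrightarrow> disjnt U V \<Longrightarrow>
  \<exists>U V. openin X U \<and> openin X V \<and> p \<in> U \<and> q \<in> V \<and> disjnt U V"
  by (rule exI[of _ U], rule exI[of _ V]) simp

lemma sep_pt_end:
  assumes "e \<in> E"
  shows "\<exists>U V. openin T U \<and> openin T V \<and> Inl x \<in> U \<and> Inr e \<in> V \<and> disjnt U V"
proof -
  obtain i where xi: "x \<in> K i" using Kun by blast
  have "openin T (Inl ` interior (K (Suc i)))" by (rule openin_Inl) simp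
  moreover have "openin T (NB (e (Suc i)))" by (rule openin_NB[OF end_mem[OF assms]])
  moreover have "Inl x \<in> Inl ` interior (K (Suc i))" using xi Kint by blast
  moreover have "Inr e \<in> NB (e (Suc i))" by (rule NB_end[OF assms])
  moreover have "disjnt (Inl ` interior (K (Suc i))) (NB (e (Suc i)))"
  proof -
    have "e (Suc i) \<subseteq> - K (Suc i)" using in_components_subset[OF end_mem[OF assms]] .
    then have "interior (K (Suc i)) \<inter> e (Suc i) = {}" using interior_subset by blast
    then show ?thesis unfolding disjnt_def NB_def by auto
  qed
  ultimately show ?thesis by (rule sepI)
qed

lemma Haus: "Hausdorff_space T"
  unfolding Hausdorff_space_def
proof (intro allI impI, elim conjE)
  fix p q assume p: "p \<in> topspace T" and q: "q \<in> topspace T" and pq: "p \<noteq> q"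
  show "\<exists>U V. openin T U \<and> openin T V \<and> p \<in> U \<and> q \<in> V \<and> disjnt U V"
  proof (cases p)
    case (Inl x)
    show ?thesis
    proof (cases q)
      case (Inl y)
      define d where "d = dist x y / 2"
      have "x \<noteq> y" using pq \<open>p = Inl x\<close> Inl by auto
      then have d: "d > 0" unfolding d_def by simp
      have "disjnt (ball x d) (ball y d)"
        unfolding disjnt_def d_def
      proof (rule ccontr)
        assume "ball x (dist x y / 2) \<inter> ball y (dist x y / 2) \<noteq> {}"
        then obtain z where "dist x z < dist x y / 2" "dist y z < dist x y / 2" by auto
        moreover have "dist x y \<le> dist x z + dist y z" by (rule dist_triangle2)
        ultimately show False by linarith
      qed
      then have dj: "disjnt (Inl ` ball x d) (Inl ` ball y d)" by (rule disjnt_Inl)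
      have "openin T (Inl ` ball x d)" "openin T (Inl ` ball y d)" by (auto intro: openin_Inl)
      moreover have "p \<in> Inl ` ball x d" "q \<in> Inl ` ball y d" using d \<open>p = Inl x\<close> Inl by auto
      ultimately show ?thesis using dj by (intro sepI)
    next
      case (Inr e)
      then have "e \<in> E" using q topT by auto
      then show ?thesis using sep_pt_end \<open>p = Inl x\<close> Inr by simp
    qed
  next
    case (Inr e)
    then have eE: "e \<in> E" using p topT by auto
    show ?thesis
    proof (cases q)
      case (Inl y)
      obtain U V where "openin T U" "openin T V" "Inl y \<in> U" "Inr e \<in> V" "disjnt U V"
        using sep_pt_end[OF eE] by blast
      moreover have "disjnt V U" using \<open>disjnt U V\<close> by (simp add: disjnt_sym)
      ultimately show ?thesis using Inl \<open>p = Inr e\<close> sepI[of T V U p q] by simp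
    next
      case (Inr e')
      then have e'E: "e' \<in> E" using q topT by auto
      have "e \<noteq> e'" using pq \<open>p = Inr e\<close> Inr by auto
      then obtain i where i: "e i \<noteq> e' i" by blast
      have dj: "disjnt (NB (e i)) (NB (e' i))" by (rule NB_disj[OF end_mem[OF eE] end_mem[OF e'E] i])
      have "openin T (NB (e i))" "openin T (NB (e' i))"
        using openin_NB end_mem eE e'E by blast+
      moreover have "p \<in> NB (e i)" "q \<in> NB (e' i)" using NB_end eE e'E \<open>p = Inr e\<close> Inr by auto
      ultimately show ?thesis using dj by (intro sepI)
    qed
  qed
qed

lemma embed: "embedding_map euclidean T Inl"
  unfolding embedding_map_def
proof (rule bijective_open_imp_homeomorphic_map)
  show "continuous_map euclidean (subtopology T (Inl ` topspace euclidean)) Inl"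
    by (rule continuous_map_into_subtopology[OF cont_Inl]) auto
  show "open_map euclidean (subtopology T (Inl ` topspace euclidean)) Inl"
    unfolding open_map_def
  proof (intro allI impI)
    fix U :: "'a set" assume "openin euclidean U"
    then have "openin T (Inl ` U)" using openin_Inl by simp
    then have "openin (subtopology T (Inl ` topspace euclidean)) (Inl ` topspace euclidean \<inter> Inl ` U)"
      by (rule openin_subtopology_Int2)
    moreover have "Inl ` topspace euclidean \<inter> Inl ` U = (Inl ` U :: ('a + (nat \<Rightarrow> 'a set)) set)" by auto
    ultimately show "openin (subtopology T (Inl ` topspace euclidean)) (Inl ` U)" by simp
  qed
  show "Inl ` topspace euclidean = topspace (subtopology T (Inl ` topspace euclidean))"
    using topT by auto
  show "inj_on Inl (topspace euclidean)" by simp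
qed

lemma dense: "T closure_of (range Inl) = topspace T"
proof
  show "T closure_of range Inl \<subseteq> topspace T" by (rule closure_of_subset_topspace)
  show "topspace T \<subseteq> T closure_of range Inl"
  proof
    fix p assume p: "p \<in> topspace T"
    show "p \<in> T closure_of range Inl"
      unfolding in_closure_of
    proof (intro conjI allI impI)
      show "p \<in> topspace T" by fact
      fix W assume W: "p \<in> W \<and> openin T W"
      show "\<exists>y. y \<in> range Inl \<and> y \<in> W"
      proof (cases p)
        case (Inl x) then show ?thesis using W by blast
      next
        case (Inr e)
        then have eE: "e \<in> E" using p topT by auto
        obtain J where J: "NB (e J) \<subseteq> W" using nbhd_end[of W e] W Inr eE by blast
        obtain z where "z \<in> e J" using end_ne[OF eE] by blast
        then have "Inl z \<in> W" using J unfolding NB_def by blast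
        then show ?thesis by blast
      qed
    qed
  qed
qed

end


context freud begin

lemma so_dir:
  assumes H2: "\<forall>m>0. \<forall>B :: 'a set. bounded B \<longrightarrow>
            (\<exists>L. bounded L \<and> B \<subseteq> L \<and> (\<forall>x. x \<notin> L \<longrightarrow> (\<exists>C\<in>components (- B). ball x m \<subseteq> C)))"
    and cf: "continuous_map T euclideanreal f"
  shows "slowly_oscillating (f \<circ> Inl)"
proof (rule ccontr)
  assume "\<not> slowly_oscillating (f \<circ> Inl)"
  then obtain r \<epsilon> where r: "r > 0" and eps: "\<epsilon> > 0" and
    H: "\<And>K'. bounded K' \<Longrightarrow> \<exists>x y. x \<notin> K' \<and> y \<notin> K' \<and> dist x y < r \<and> \<not> \<bar>f (Inl x) - f (Inl y)\<bar> < \<epsilon>"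
    unfolding slowly_oscillating_def by auto
  define x0 :: 'a where "x0 = undefined"
  have "\<forall>n::nat. \<exists>xy. fst xy \<notin> cball x0 (real n) \<and> snd xy \<notin> cball x0 (real n) \<and> dist (fst xy) (snd xy) < r
        \<and> \<not> \<bar>f (Inl (fst xy)) - f (Inl (snd xy))\<bar> < \<epsilon>"
  proof
    fix n :: nat
    obtain x y where "x \<notin> cball x0 (real n)" "y \<notin> cball x0 (real n)" "dist x y < r"
      "\<not> \<bar>f (Inl x) - f (Inl y)\<bar> < \<epsilon>" using H[of "cball x0 (real n)"] by auto
    then show "\<exists>xy. fst xy \<notin> cball x0 (real n) \<and> snd xy \<notin> cball x0 (real n) \<and> dist (fst xy) (snd xy) < r
        \<and> \<not> \<bar>f (Inl (fst xy)) - f (Inl (snd xy))\<bar> < \<epsilon>" by (intro exI[of _ "(x,y)"]) simp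
  qed
  then obtain g where g: "\<And>n::nat. fst (g n) \<notin> cball x0 (real n) \<and> snd (g n) \<notin> cball x0 (real n) \<and>
      dist (fst (g n)) (snd (g n)) < r \<and> \<not> \<bar>f (Inl (fst (g n))) - f (Inl (snd (g n)))\<bar> < \<epsilon>"
    by (metis choice)
  define xs where "xs n = fst (g n)" for n
  define ys where "ys n = snd (g n)" for n
  have xs: "dist x0 (xs n) > real n" for n using g[of n] unfolding xs_def by simp
  have xy: "dist (xs n) (ys n) < r" for n using g[of n] unfolding xs_def ys_def by simp
  have fxy: "\<not> \<bar>f (Inl (xs n)) - f (Inl (ys n))\<bar> < \<epsilon>" for n using g[of n] unfolding xs_def ys_def by simp
  define C where "C n = T closure_of (Inl ` xs ` {n..})" for n
  have "(\<Inter>n. C n) \<noteq> {}"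
  proof (rule compact_space_imp_nest[OF compact_T])
    show "closedin T (C n)" for n unfolding C_def by simp
    show "C n \<noteq> {}" for n
    proof -
      have "Inl ` xs ` {n..} \<subseteq> topspace T" using topT by auto
      then have "Inl (xs n) \<in> C n" unfolding C_def using closure_of_subset by fastforce
      then show ?thesis by blast
    qed
    show "decseq C" unfolding decseq_def C_def
      by (intro allI impI closure_of_mono image_mono) auto
  qed
  then obtain p where p: "\<And>n. p \<in> C n" by blast
  have pT: "p \<in> topspace T" using p[of 0] unfolding C_def using closure_of_subset_topspace by fastforce
  have clu: "\<exists>k\<ge>n. Inl (xs k) \<in> W" if "openin T W" "p \<in> W" for W n
  proof -
    have "p \<in> T closure_of (Inl ` xs ` {n..})" using p[of n] unfolding C_def .
    then have A: "\<forall>U. p \<in> U \<and> openin T U \<longrightarrow> (\<exists>y. y \<in> Inl ` xs ` {n..} \<and> y \<in> U)"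
      unfolding in_closure_of by (rule conjunct2)
    have "p \<in> W \<and> openin T W" using that by simp
    then have "\<exists>y. y \<in> Inl ` xs ` {n..} \<and> y \<in> W" using A by (rule_tac mp[OF spec[OF A]])
    then obtain y where "y \<in> Inl ` xs ` {n..}" "y \<in> W" by (elim exE conjE)
    then obtain k where "k \<ge> n" "y = Inl (xs k)" by auto
    then show ?thesis using \<open>y \<in> W\<close> by blast
  qed
  show False
  proof (cases p)
    case (Inl z)
    have "openin T (Inl ` ball z 1)" by (rule openin_Inl) simp
    moreover have "p \<in> Inl ` ball z 1" using Inl by simp
    ultimately obtain k where k: "k \<ge> nat \<lceil>dist x0 z + 1\<rceil>" "Inl (xs k) \<in> Inl ` ball z 1"
      using clu by blast
    then have "dist z (xs k) < 1" by auto
    moreover have "dist x0 (xs k) \<le> dist x0 z + dist z (xs k)" by (rule dist_triangle)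
    moreover have "real k \<ge> dist x0 z + 1" using k(1) by linarith
    ultimately show False using xs[of k] by linarith
  next
    case (Inr e)
    then have eE: "e \<in> E" using pT topT by auto
    define W where "W = {q \<in> topspace T. f q \<in> ball (f p) (\<epsilon>/2)}"
    have oW: "openin T W" unfolding W_def by (rule openin_continuous_map_preimage[OF cf]) simp
    have pW: "p \<in> W" unfolding W_def using pT eps by simp
    obtain J where J: "NB (e J) \<subseteq> W" using nbhd_end[OF oW] pW Inr eE by blast
    obtain L where L: "bounded L" "K J \<subseteq> L" "\<And>x. x \<notin> L \<Longrightarrow> \<exists>C\<in>components (- K J). ball x r \<subseteq> C"
      using H2 r Kbounded[of J] by meson
    obtain R where R: "\<And>y. y \<in> L \<Longrightarrow> dist x0 y \<le> R" using L(1) bounded_any_center[of L x0] by blast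
    have pJ: "p \<in> NB (e J)" using Inr NB_end[OF eE] by simp
    obtain k where k: "k \<ge> nat \<lceil>R\<rceil>" "Inl (xs k) \<in> NB (e J)"
      using clu[OF openin_NB[OF end_mem[OF eE, of J]] pJ] by blast
    have "real k \<ge> R" using k(1) by linarith
    then have "xs k \<notin> L" using R xs[of k] by force
    then obtain C' where C': "C' \<in> components (- K J)" "ball (xs k) r \<subseteq> C'" using L(3) by blast
    have xe: "xs k \<in> e J" using k(2) unfolding NB_def by auto
    have "xs k \<in> C'" using C'(2) r by auto
    then have "C' = e J" using components_eq[OF C'(1) end_mem[OF eE]] xe by blast
    moreover have "ys k \<in> ball (xs k) r" using xy[of k] by simp
    ultimately have "ys k \<in> e J" using C'(2) by blast
    then have "Inl (ys k) \<in> W" using J unfolding NB_def by blast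
    moreover have "Inl (xs k) \<in> W" using J k(2) by blast
    ultimately have "dist (f (Inl (ys k))) (f p) < \<epsilon>/2" "dist (f (Inl (xs k))) (f p) < \<epsilon>/2"
      unfolding W_def by (auto simp: dist_commute)
    then show False using fxy[of k] unfolding dist_real_def by linarith
  qed
qed

end


context freud begin

lemma pick_U:
  assumes B: "bounded B" "B \<subseteq> K i" and m: "m > 0"
    and neg: "\<And>L. bounded L \<Longrightarrow> B \<subseteq> L \<Longrightarrow> \<exists>x. x \<notin> L \<and> \<not> (\<exists>C\<in>components (- B). ball x m \<subseteq> C)"
  shows "\<exists>U\<in>components (- K i). \<forall>L. bounded L \<longrightarrow>
           (\<exists>x y. x \<notin> L \<and> y \<notin> L \<and> dist x y < m \<and> x \<notin> K (Suc i) \<and> y \<notin> K (Suc i) \<and> x \<in> U \<and> y \<notin> U)"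
proof (rule ccontr)
  define P where "P U L \<longleftrightarrow> (\<exists>x y. x \<notin> L \<and> y \<notin> L \<and> dist x y < m \<and> x \<notin> K (Suc i) \<and> y \<notin> K (Suc i) \<and> x \<in> U \<and> y \<notin> U)" for U L
  define F where "F = {C \<in> components (- K i). \<not> C \<subseteq> K (Suc i)}"
  have fF: "finite F" unfolding F_def by (rule KL[OF Kc Kc Kint])
  assume "\<not> ?thesis"
  then have "\<forall>U\<in>F. \<exists>L. bounded L \<and> \<not> P U L" unfolding F_def P_def by blast
  then obtain Lf where Lf: "\<And>U. U \<in> F \<Longrightarrow> bounded (Lf U) \<and> \<not> P U (Lf U)" by metis
  define Ls where "Ls = B \<union> K (Suc i) \<union> \<Union>(Lf ` F)"
  have "bounded (\<Union>(Lf ` F))" using fF Lf by (intro bounded_Union) auto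
  then have "bounded Ls" unfolding Ls_def using B(1) Kbounded by simp
  define x0 :: 'a where "x0 = undefined"
  obtain R where R: "\<And>y. y \<in> Ls \<Longrightarrow> dist x0 y \<le> R"
    using bounded_any_center[of Ls x0] \<open>bounded Ls\<close> by blast
  have "bounded (cball x0 (R + m))" by simp
  moreover have "B \<subseteq> cball x0 (R + m)" using R m unfolding Ls_def by force
  ultimately obtain x where x: "x \<notin> cball x0 (R + m)" and bad: "\<not> (\<exists>C\<in>components (- B). ball x m \<subseteq> C)"
    using neg by blast
  have far: "y \<notin> Ls" if "dist x y < m" for y
  proof
    assume "y \<in> Ls"
    then have "dist x0 y \<le> R" by (rule R)
    moreover have "dist x0 x \<le> dist x0 y + dist x y" using dist_triangle[of x0 x y] by (simp add: dist_commute)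
    ultimately show False using x that by simp
  qed
  have xLs: "x \<notin> Ls" using far m by simp
  then have xK: "x \<notin> K (Suc i)" "x \<notin> B" unfolding Ls_def by auto
  then have xKi: "x \<in> - K i" using Ksuc by blast
  define Ux where "Ux = connected_component_set (- K i) x"
  have Ux: "Ux \<in> components (- K i)" unfolding Ux_def using xKi by (rule componentsI)
  have xUx: "x \<in> Ux" unfolding Ux_def using xKi by simp
  have UxF: "Ux \<in> F" unfolding F_def using Ux xUx xK by blast
  define Cx where "Cx = connected_component_set (- B) x"
  have Cx: "Cx \<in> components (- B)" unfolding Cx_def using xK by (intro componentsI) simp
  have UC: "Ux \<subseteq> Cx" unfolding Ux_def Cx_def using B(2) by (intro connected_component_mono) blast
  have "\<not> ball x m \<subseteq> Cx" using bad Cx by blast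
  then obtain y where y0: "y \<in> ball x m" "y \<notin> Cx" by blast
  then have y: "dist x y < m" "y \<notin> Cx" by auto
  have yLs: "y \<notin> Ls" using far y(1) .
  have "P Ux (Lf Ux)" unfolding P_def
  proof (intro exI conjI)
    show "x \<notin> Lf Ux" "y \<notin> Lf Ux" using xLs yLs UxF unfolding Ls_def by auto
    show "dist x y < m" by fact
    show "x \<notin> K (Suc i)" by fact
    show "y \<notin> K (Suc i)" using yLs unfolding Ls_def by auto
    show "x \<in> Ux" by fact
    show "y \<notin> Ux" using y(2) UC by blast
  qed
  then show False using Lf[OF UxF] by blast
qed

lemma g_fun:
  assumes ne: "K i \<noteq> {}" and ub: "\<not> bounded (UNIV :: 'a set)"
  shows "\<exists>g::'a \<Rightarrow> real. continuous_on UNIV g \<and> (\<forall>x. 0 \<le> g x) \<and> (\<forall>x\<in>K i. g x = 0) \<and> (\<forall>x. x \<notin> K (Suc i) \<longrightarrow> g x = 1)"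
proof -
  define A where "A = K i"
  define Z where "Z = - interior (K (Suc i))"
  have Zne: "Z \<noteq> {}"
  proof
    assume "Z = {}"
    then have "K (Suc i) = UNIV" unfolding Z_def using interior_subset by blast
    then show False using Kbounded[of "Suc i"] ub by simp
  qed
  have clA: "closure A = A" unfolding A_def using Kclosed by simp
  have clZ: "closure Z = Z" unfolding Z_def by (simp add: closure_complement)
  have pos: "infdist x A + infdist x Z \<noteq> 0" for x
  proof
    assume "infdist x A + infdist x Z = 0"
    then have "infdist x A = 0" "infdist x Z = 0" using infdist_nonneg[of x A] infdist_nonneg[of x Z] by linarith+
    then have "x \<in> A" "x \<in> Z" using in_closure_iff_infdist_zero[OF ne[folded A_def]] in_closure_iff_infdist_zero[OF Zne] clA clZ by auto
    then show False unfolding A_def Z_def using Kint by blast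
  qed
  define g where "g x = infdist x A / (infdist x A + infdist x Z)" for x
  have "continuous_on UNIV g" unfolding g_def
    by (intro continuous_intros) (use pos in auto)
  moreover have "\<forall>x. 0 \<le> g x" unfolding g_def by (simp add: infdist_nonneg)
  moreover have "\<forall>x\<in>K i. g x = 0" unfolding g_def A_def by simp
  moreover have "\<forall>x. x \<notin> K (Suc i) \<longrightarrow> g x = 1"
  proof (intro allI impI)
    fix x assume x: "x \<notin> K (Suc i)"
    then have "x \<in> Z" unfolding Z_def using interior_subset by blast
    then have "infdist x Z = 0" by simp
    moreover have "infdist x A \<noteq> 0"
    proof
      assume "infdist x A = 0"
      then have "x \<in> A" using in_closure_iff_infdist_zero[OF ne[folded A_def]] clA by auto
      then show False using x Ksuc unfolding A_def by blast
    qed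
    ultimately show "g x = 1" unfolding g_def by simp
  qed
  ultimately show ?thesis by blast
qed

end


context freud begin

lemma f_cont:
  fixes g :: "'a \<Rightarrow> real"
  assumes gc: "continuous_on UNIV g" and gnn: "\<forall>x. 0 \<le> g x" and g0: "\<forall>x\<in>K i. g x = 0"
    and g1: "\<forall>x. x \<notin> K (Suc i) \<longrightarrow> g x = 1" and U: "U \<in> components (- K i)"
  shows "continuous_map T euclideanreal (case_sum (\<lambda>x. if x \<in> U then g x else 0) (\<lambda>e. if e i = U then 1 else 0))"
    (is "continuous_map T euclideanreal ?f")
proof (rule continuous_mapI_real)
  have gpt: "\<exists>d>0. \<forall>y. dist y x < d \<longrightarrow> \<bar>g y - g x\<bar> < \<epsilon>" if "\<epsilon> > 0" for x \<epsilon>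
  proof -
    have "\<exists>d>0. \<forall>y\<in>UNIV. dist y x < d \<longrightarrow> dist (g y) (g x) < \<epsilon>"
      using gc that unfolding continuous_on_iff by blast
    then show ?thesis unfolding dist_real_def by simp
  qed
  have UK: "U \<subseteq> - K i" using U by (rule in_components_subset)
  fix p \<epsilon> assume p: "p \<in> topspace T" and eps: "(\<epsilon>::real) > 0"
  show "\<exists>W. openin T W \<and> p \<in> W \<and> (\<forall>q\<in>W. \<bar>?f q - ?f p\<bar> < \<epsilon>)"
  proof (cases p)
    case (Inl x)
    obtain d where d: "d > 0" "\<And>y. dist y x < d \<Longrightarrow> \<bar>g y - g x\<bar> < \<epsilon>" using gpt[OF eps] by blast
    show ?thesis
    proof (cases "x \<in> K i")
      case True
      have "x \<notin> U" using True UK by blast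
      have "\<forall>q\<in>Inl ` ball x d. \<bar>?f q - ?f p\<bar> < \<epsilon>"
      proof
        fix q :: "'a + (nat \<Rightarrow> 'a set)" assume "q \<in> Inl ` ball x d"
        then obtain y where y: "q = Inl y" "dist y x < d" by (auto simp: dist_commute)
        have "\<bar>g y\<bar> < \<epsilon>" using d(2)[OF y(2)] g0 True by simp
        then show "\<bar>?f q - ?f p\<bar> < \<epsilon>" using y(1) Inl \<open>x \<notin> U\<close> eps by auto
      qed
      moreover have "openin T (Inl ` ball x d)" by (rule openin_Inl) simp
      moreover have "p \<in> Inl ` ball x d" using Inl d(1) by simp
      ultimately show ?thesis by blast
    next
      case False
      define V where "V = connected_component_set (- K i) x"
      have V: "V \<in> components (- K i)" unfolding V_def using False by (intro componentsI) simp
      have xV: "x \<in> V" unfolding V_def using False by simp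
      have "\<forall>q\<in>Inl ` (ball x d \<inter> V). \<bar>?f q - ?f p\<bar> < \<epsilon>"
      proof
        fix q :: "'a + (nat \<Rightarrow> 'a set)" assume "q \<in> Inl ` (ball x d \<inter> V)"
        then obtain y where y: "q = Inl y" "dist y x < d" "y \<in> V" by (auto simp: dist_commute)
        have "y \<in> U \<longleftrightarrow> x \<in> U"
        proof
          assume "y \<in> U" then have "V = U" using components_eq[OF V U] y(3) by blast
          then show "x \<in> U" using xV by simp
        next
          assume "x \<in> U" then have "V = U" using components_eq[OF V U] xV by blast
          then show "y \<in> U" using y(3) by simp
        qed
        then show "\<bar>?f q - ?f p\<bar> < \<epsilon>" using y(1) Inl d(2)[OF y(2)] eps by auto
      qed
      moreover have "openin T (Inl ` (ball x d \<inter> V))" by (rule openin_Inl) (use Kcomp_open[OF V] in \<open>simp add: open_Int\<close>)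
      moreover have "p \<in> Inl ` (ball x d \<inter> V)" using Inl d(1) xV by simp
      ultimately show ?thesis by blast
    qed
  next
    case (Inr e)
    then have eE: "e \<in> E" using p topT by auto
    have "\<forall>q\<in>NB (e (Suc i)). ?f q = ?f p"
    proof
      fix q :: "'a + (nat \<Rightarrow> 'a set)" assume q: "q \<in> NB (e (Suc i))"
      show "?f q = ?f p"
      proof (cases q)
        case (Inl y)
        then have y: "y \<in> e (Suc i)" using q unfolding NB_def by auto
        then have yi: "y \<in> e i" using end_dec[OF eE, of i "Suc i"] by auto
        have "y \<notin> K (Suc i)" using y in_components_subset[OF end_mem[OF eE, of "Suc i"]] by blast
        then have "g y = 1" using g1 by simp
        moreover have "y \<in> U \<longleftrightarrow> e i = U"
        proof
          assume "y \<in> U" then show "e i = U" using components_eq[OF end_mem[OF eE] U] yi by blast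
        next
          assume "e i = U" then show "y \<in> U" using yi by simp
        qed
        ultimately show ?thesis using Inl \<open>p = Inr e\<close> by simp
      next
        case (Inr e')
        then obtain j where e': "e' \<in> E" "e' j \<subseteq> e (Suc i)" using q unfolding NB_def by auto
        have "e' (Suc i) = e (Suc i)" by (rule end_lvl[OF e'(1) end_mem[OF eE] e'(2)])
        then have "e' (Suc i) \<subseteq> e' i \<inter> e i" using end_dec[OF e'(1), of i "Suc i"] end_dec[OF eE, of i "Suc i"] by auto
        then have "e' i \<inter> e i \<noteq> {}" using end_ne[OF e'(1), of "Suc i"] by blast
        then have "e' i = e i" using components_eq[OF end_mem[OF e'(1)] end_mem[OF eE]] by blast
        then show ?thesis using Inr \<open>p = Inr e\<close> by simp
      qed
    qed
    then have "\<forall>q\<in>NB (e (Suc i)). \<bar>?f q - ?f p\<bar> < \<epsilon>" using eps by simp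
    moreover have "openin T (NB (e (Suc i)))" by (rule openin_NB[OF end_mem[OF eE]])
    moreover have "p \<in> NB (e (Suc i))" using Inr NB_end[OF eE] by simp
    ultimately show ?thesis by blast
  qed
qed

lemma conv_dir:
  assumes cc: "coarse_compactification T Inl"
  shows "\<forall>m>0. \<forall>B :: 'a set. bounded B \<longrightarrow>
            (\<exists>L. bounded L \<and> B \<subseteq> L \<and> (\<forall>x. x \<notin> L \<longrightarrow> (\<exists>C\<in>components (- B). ball x m \<subseteq> C)))"
proof (intro allI impI)
  fix m :: real and B :: "'a set" assume m: "m > 0" and B: "bounded B"
  show "\<exists>L. bounded L \<and> B \<subseteq> L \<and> (\<forall>x. x \<notin> L \<longrightarrow> (\<exists>C\<in>components (- B). ball x m \<subseteq> C))"
  proof (cases "bounded (UNIV :: 'a set)")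
    case True then show ?thesis by (intro exI[of _ UNIV]) simp
  next
    case ub: False
    show ?thesis
    proof (rule ccontr)
      assume "\<not> ?thesis"
      then have neg: "\<And>L. bounded L \<Longrightarrow> B \<subseteq> L \<Longrightarrow> \<exists>x. x \<notin> L \<and> \<not> (\<exists>C\<in>components (- B). ball x m \<subseteq> C)"
        by blast
      define x0 :: 'a where "x0 = undefined"
      obtain i where i: "B \<union> {x0} \<subseteq> K i" using bounded_in_K[of "B \<union> {x0}"] B by auto
      then have Bi: "B \<subseteq> K i" and ne: "K i \<noteq> {}" by auto
      obtain U where U: "U \<in> components (- K i)" and
        PU: "\<And>L. bounded L \<Longrightarrow> \<exists>x y. x \<notin> L \<and> y \<notin> L \<and> dist x y < m \<and> x \<notin> K (Suc i) \<and> y \<notin> K (Suc i) \<and> x \<in> U \<and> y \<notin> U"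
        using pick_U[OF B Bi m neg] by blast
      obtain g :: "'a \<Rightarrow> real" where g: "continuous_on UNIV g" "\<forall>x. 0 \<le> g x" "\<forall>x\<in>K i. g x = 0"
        "\<forall>x. x \<notin> K (Suc i) \<longrightarrow> g x = 1"
        using g_fun[OF ne ub] by blast
      define f where "f = case_sum (\<lambda>x. if x \<in> U then g x else 0) (\<lambda>e. if e i = U then 1 else (0::real))"
      have "continuous_map T euclideanreal f" unfolding f_def by (rule f_cont[OF g U])
      then have "slowly_oscillating (f \<circ> Inl)" using cc unfolding coarse_compactification_def by blast
      then obtain K' where K': "bounded K'" "\<And>x y. x \<notin> K' \<Longrightarrow> y \<notin> K' \<Longrightarrow> dist x y < m \<Longrightarrow> \<bar>(f \<circ> Inl) x - (f \<circ> Inl) y\<bar> < 1/2"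
        unfolding slowly_oscillating_def using m by (meson half_gt_zero zero_less_one)
      obtain x y where xy: "x \<notin> K'" "y \<notin> K'" "dist x y < m" "x \<notin> K (Suc i)" "x \<in> U" "y \<notin> U"
        using PU[OF K'(1)] by blast
      have "\<bar>(f \<circ> Inl) x - (f \<circ> Inl) y\<bar> < 1/2" using K'(2)[OF xy(1-3)] .
      moreover have "(f \<circ> Inl) x = 1" using xy(4,5) g(4) unfolding f_def by simp
      moreover have "(f \<circ> Inl) y = 0" using xy(6) unfolding f_def by simp
      ultimately show False by simp
    qed
  qed
qed

end

theorem main:
  fixes K :: "nat \<Rightarrow> 'a::metric_space set"
  assumes "proper_metric TYPE('a)"
    and "connected (UNIV :: 'a set)"
    and "locally_connected_space (euclidean :: 'a topology)"
    and "exhaustion K"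
  shows "coarse_compactification (freudenthal K) Inl \<longleftrightarrow>
         (\<forall>m>0. \<forall>B :: 'a set. bounded B \<longrightarrow>
            (\<exists>L. bounded L \<and> B \<subseteq> L \<and>
               (\<forall>x. x \<notin> L \<longrightarrow> (\<exists>C\<in>components (- B). ball x m \<subseteq> C))))"
proof -
  interpret freud K by (unfold_locales) (use assms in auto)
  show ?thesis
  proof
    assume "coarse_compactification (freudenthal K) Inl"
    then show "\<forall>m>0. \<forall>B :: 'a set. bounded B \<longrightarrow>
            (\<exists>L. bounded L \<and> B \<subseteq> L \<and> (\<forall>x. x \<notin> L \<longrightarrow> (\<exists>C\<in>components (- B). ball x m \<subseteq> C)))"
      by (rule conv_dir)
  next
    assume H: "\<forall>m>0. \<forall>B :: 'a set. bounded B \<longrightarrow>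
            (\<exists>L. bounded L \<and> B \<subseteq> L \<and> (\<forall>x. x \<notin> L \<longrightarrow> (\<exists>C\<in>components (- B). ball x m \<subseteq> C)))"
    have "compactification (freudenthal K) Inl"
      unfolding compactification_def using compact_T Haus embed dense by blast
    moreover have "\<forall>f. continuous_map (freudenthal K) euclideanreal f \<longrightarrow> slowly_oscillating (f \<circ> Inl)"
      using so_dir[OF H] by blast
    ultimately show "coarse_compactification (freudenthal K) Inl"
      unfolding coarse_compactification_def by blast
  qed
qed


theorem theorem2p2:
  fixes K :: "nat \<Rightarrow> 'a::metric_space set"
  assumes "proper_metric TYPE('a)"
    and "connected (UNIV :: 'a set)"
    and "locally_connected_space (euclidean :: 'a topology)"
    and "exhaustion K"
  shows "coarse_compactification (freudenthal K) Inl \<longleftrightarrow>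
         (\<forall>m>0. \<forall>B :: 'a set. bounded B \<longrightarrow>
            (\<exists>L. bounded L \<and> B \<subseteq> L \<and>
               (\<forall>x. x \<notin> L \<longrightarrow> (\<exists>C\<in>components (- B). ball x m \<subseteq> C))))"
    by (rule main[OF assms])

end
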